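(* Let $\phi$ be an $n$-cube USO that does not have property L, and let the $2n$-cube USO $\psi$ be a kaleidoscope for $\phi$. Then every $2n$-cube USO $\psi'$ isomorphic to $\psi$ does not have property L.
   Context: For sets $U,V$ let $U\oplus V=(U\cup V)\setminus(U\cap V)$. An $m$-cube orientation on the vertex set of all subsets of $[m]$ has, for each vertex $V$ and $i\in[m]$, exactly one of the directed edges $V\to V\oplus\{i\}$, $V\oplus\{i\}\to V$; it is identified with its outmap $\phi(V)=\{i: V\to V\oplus\{i\}\}$. It is a unique sink orientation (USO) if every face (subgraph induced by an interval $\{X:A\subseteq X\subseteq B\}$) has exactly one sink. For a vertex $V$, the L-graph has vertex set $[m]\setminus V$ and an arc $(i,j)$ for distinct $i,j\notin V$ whenever $j\in\phi(V)\oplus\phi(V\cup\{i\})$; the orientation has property L if all its L-graphs are acyclic. For $V\subseteq[2n]$ write $V_L=V\cap[n]$ and $V_H=\{i-n: i\in V\cap\{n+1,\dots,2n\}\}$. A $2n$-cube USO $\psi$ is a kaleidoscope for the $n$-cube USO $\phi$ if $\psi(V)_L=\phi(V_L\oplus V_H)$ for all $V\subseteq[2n]$. Two $m$-cube USOs $\psi,\psi'$ are isomorphic if there is a bijection $h$ of the set of subsets of $[m]$ such that for all $V,V'$, $V\to V'$ in $\psi$ if and only if $h(V)\to h(V')$ in $\psi'$. *)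

theory Defs
  imports Main
begin

definition sdiff :: "nat set \<Rightarrow> nat set \<Rightarrow> nat set" (infixl "\<oplus>\<^sub>s" 65) where
  "U \<oplus>\<^sub>s V = (U \<union> V) - (U \<inter> V)"

text \<open>An m-cube orientation given by its outmap phi on the subsets of [m] = {1..m}.
  phi V is the set of i with an edge V \<rightarrow> V (+) {i}.\<close>
definition cube_orientation :: "nat \<Rightarrow> (nat set \<Rightarrow> nat set) \<Rightarrow> bool" where
  "cube_orientation m phi \<longleftrightarrow>
     (\<forall>V. V \<subseteq> {1..m} \<longrightarrow> phi V \<subseteq> {1..m}) \<and>
     (\<forall>V i. V \<subseteq> {1..m} \<longrightarrow> i \<in> {1..m} \<longrightarrow> (i \<in> phi V \<longleftrightarrow> i \<notin> phi (V \<oplus>\<^sub>s {i})))"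

definition cube_edge :: "(nat set \<Rightarrow> nat set) \<Rightarrow> nat set \<Rightarrow> nat set \<Rightarrow> bool" where
  "cube_edge phi V V' \<longleftrightarrow> (\<exists>i. i \<in> phi V \<and> V' = V \<oplus>\<^sub>s {i})"

definition face_sink :: "(nat set \<Rightarrow> nat set) \<Rightarrow> nat set \<Rightarrow> nat set \<Rightarrow> nat set \<Rightarrow> bool" where
  "face_sink phi A B X \<longleftrightarrow> A \<subseteq> X \<and> X \<subseteq> B \<and>
     (\<forall>Y. A \<subseteq> Y \<and> Y \<subseteq> B \<longrightarrow> \<not> cube_edge phi X Y)"

definition is_USO :: "nat \<Rightarrow> (nat set \<Rightarrow> nat set) \<Rightarrow> bool" where
  "is_USO m phi \<longleftrightarrow> cube_orientation m phi \<and>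
     (\<forall>A B. A \<subseteq> B \<and> B \<subseteq> {1..m} \<longrightarrow> (\<exists>!X. face_sink phi A B X))"

definition L_graph :: "nat \<Rightarrow> (nat set \<Rightarrow> nat set) \<Rightarrow> nat set \<Rightarrow> (nat \<times> nat) set" where
  "L_graph m phi V = {(i, j). i \<in> {1..m} - V \<and> j \<in> {1..m} - V \<and> i \<noteq> j \<and>
      j \<in> phi V \<oplus>\<^sub>s phi (V \<union> {i})}"

definition property_L :: "nat \<Rightarrow> (nat set \<Rightarrow> nat set) \<Rightarrow> bool" where
  "property_L m phi \<longleftrightarrow> (\<forall>V. V \<subseteq> {1..m} \<longrightarrow> acyclic (L_graph m phi V))"

definition low_part :: "nat \<Rightarrow> nat set \<Rightarrow> nat set" where
  "low_part n V = V \<inter> {1..n}"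

definition high_part :: "nat \<Rightarrow> nat set \<Rightarrow> nat set" where
  "high_part n V = (\<lambda>i. i - n) ` (V \<inter> {n+1..2*n})"

definition kaleidoscope :: "nat \<Rightarrow> (nat set \<Rightarrow> nat set) \<Rightarrow> (nat set \<Rightarrow> nat set) \<Rightarrow> bool" where
  "kaleidoscope n phi psi \<longleftrightarrow> is_USO (2*n) psi \<and>
     (\<forall>V. V \<subseteq> {1..2*n} \<longrightarrow>
        low_part n (psi V) = phi (low_part n V \<oplus>\<^sub>s high_part n V))"

definition USO_isomorphic :: "nat \<Rightarrow> (nat set \<Rightarrow> nat set) \<Rightarrow> (nat set \<Rightarrow> nat set) \<Rightarrow> bool" where
  "USO_isomorphic m psi psi' \<longleftrightarrow>
     (\<exists>h. bij_betw h (Pow {1..m}) (Pow {1..m}) \<and>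
        (\<forall>V\<in>Pow {1..m}. \<forall>V'\<in>Pow {1..m}. cube_edge psi V V' \<longleftrightarrow> cube_edge psi' (h V) (h V')))"

end

theory Submission
  imports Defs
begin

lemma sd_mem: "x \<in> A \<oplus>\<^sub>s B \<longleftrightarrow> (x \<in> A) \<noteq> (x \<in> B)"
  unfolding sdiff_def by auto

lemma sd_cancel: "A \<oplus>\<^sub>s (A \<oplus>\<^sub>s B) = B" "(B \<oplus>\<^sub>s A) \<oplus>\<^sub>s A = B"
  by (auto simp: set_eq_iff sd_mem)

lemma square_lemma:
  assumes "b = a \<oplus>\<^sub>s {x}" "c = b \<oplus>\<^sub>s {y}" "dd = c \<oplus>\<^sub>s {z}" "a = dd \<oplus>\<^sub>s {w}"
    "a \<noteq> c" "b \<noteq> dd"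
  shows "a \<oplus>\<^sub>s b = dd \<oplus>\<^sub>s c"
proof -
  have xy: "x \<noteq> y" using assms(1,2,5) by (auto simp: set_eq_iff sd_mem)
  have xw: "x \<noteq> w" using assms(1,4,6) by (auto simp: set_eq_iff sd_mem)
  have "x = z"
  proof (rule ccontr)
    assume "x \<noteq> z"
    have "(x \<in> a) = (x \<in> dd \<oplus>\<^sub>s {w})" using assms(4) by simp
    also have "\<dots> = (x \<in> a \<oplus>\<^sub>s {x} \<oplus>\<^sub>s {y} \<oplus>\<^sub>s {z} \<oplus>\<^sub>s {w})" using assms(1-3) by simp
    finally show False using xy xw \<open>x \<noteq> z\<close> by (auto simp: sd_mem)
  qed
  thus ?thesis using assms(1,3) by (auto simp: set_eq_iff sd_mem)
qed

locale iso_setup =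
  fixes m :: nat and psi psi' :: "nat set \<Rightarrow> nat set" and h :: "nat set \<Rightarrow> nat set"
  assumes ori: "cube_orientation m psi"
    and bij: "bij_betw h (Pow {1..m}) (Pow {1..m})"
    and edge: "\<forall>V\<in>Pow {1..m}. \<forall>V'\<in>Pow {1..m}. cube_edge psi V V' \<longleftrightarrow> cube_edge psi' (h V) (h V')"
begin

lemma hin: "X \<subseteq> {1..m} \<Longrightarrow> h X \<subseteq> {1..m}"
  using bij by (auto dest: bij_betwE)

lemma hinj: "X \<subseteq> {1..m} \<Longrightarrow> Y \<subseteq> {1..m} \<Longrightarrow> h X = h Y \<Longrightarrow> X = Y"
  using bij unfolding bij_betw_def inj_on_def by auto

lemma sub_sd: "X \<subseteq> {1..m} \<Longrightarrow> d \<in> {1..m} \<Longrightarrow> X \<oplus>\<^sub>s {d} \<subseteq> {1..m}"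
  by (auto simp: sd_mem)

lemma edge_sd: "cube_edge f X Y \<Longrightarrow> \<exists>c. Y = X \<oplus>\<^sub>s {c}"
  unfolding cube_edge_def by auto

lemma adj:
  assumes X: "X \<subseteq> {1..m}" and d: "d \<in> {1..m}"
  shows "\<exists>c. h (X \<oplus>\<^sub>s {d}) = h X \<oplus>\<^sub>s {c}"
proof -
  have Y: "X \<oplus>\<^sub>s {d} \<subseteq> {1..m}" using sub_sd X d .
  have "d \<in> psi X \<or> d \<in> psi (X \<oplus>\<^sub>s {d})" using ori X d unfolding cube_orientation_def by blast
  thus ?thesis
  proof
    assume "d \<in> psi X"
    hence "cube_edge psi X (X \<oplus>\<^sub>s {d})" unfolding cube_edge_def by blast
    hence "cube_edge psi' (h X) (h (X \<oplus>\<^sub>s {d}))" using edge X Y by blast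
    thus ?thesis by (rule edge_sd)
  next
    assume "d \<in> psi (X \<oplus>\<^sub>s {d})"
    hence "cube_edge psi (X \<oplus>\<^sub>s {d}) X" unfolding cube_edge_def using sd_cancel(2)[of X "{d}"] by metis
    hence "cube_edge psi' (h (X \<oplus>\<^sub>s {d})) (h X)" using edge X Y by blast
    then obtain c where "h X = h (X \<oplus>\<^sub>s {d}) \<oplus>\<^sub>s {c}" using edge_sd by blast
    hence "h (X \<oplus>\<^sub>s {d}) = h X \<oplus>\<^sub>s {c}" using sd_cancel(2) by metis
    thus ?thesis by blast
  qed
qed

definition delta where "delta X d = h X \<oplus>\<^sub>s h (X \<oplus>\<^sub>s {d})"

lemma delta_shift:
  assumes X: "X \<subseteq> {1..m}" and d: "d \<in> {1..m}" and e: "e \<in> {1..m}" and de: "d \<noteq> e"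
  shows "delta (X \<oplus>\<^sub>s {e}) d = delta X d"
proof -
  have X1: "X \<oplus>\<^sub>s {d} \<subseteq> {1..m}" using sub_sd X d .
  have X2: "X \<oplus>\<^sub>s {e} \<subseteq> {1..m}" using sub_sd X e .
  have X3: "X \<oplus>\<^sub>s {d} \<oplus>\<^sub>s {e} \<subseteq> {1..m}" using sub_sd X1 e .
  have eq: "X \<oplus>\<^sub>s {e} \<oplus>\<^sub>s {d} = X \<oplus>\<^sub>s {d} \<oplus>\<^sub>s {e}" by (auto simp: set_eq_iff sd_mem)
  obtain x where e1: "h (X \<oplus>\<^sub>s {d}) = h X \<oplus>\<^sub>s {x}" using adj X d by blast
  obtain y where e2: "h (X \<oplus>\<^sub>s {d} \<oplus>\<^sub>s {e}) = h (X \<oplus>\<^sub>s {d}) \<oplus>\<^sub>s {y}" using adj X1 e by blast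
  obtain z where e3: "h (X \<oplus>\<^sub>s {e} \<oplus>\<^sub>s {d}) = h (X \<oplus>\<^sub>s {e}) \<oplus>\<^sub>s {z}" using adj X2 d by blast
  obtain w where e4: "h (X \<oplus>\<^sub>s {e} \<oplus>\<^sub>s {e}) = h (X \<oplus>\<^sub>s {e}) \<oplus>\<^sub>s {w}" using adj X2 e by blast
  have e3': "h (X \<oplus>\<^sub>s {e}) = h (X \<oplus>\<^sub>s {d} \<oplus>\<^sub>s {e}) \<oplus>\<^sub>s {z}" using e3 eq sd_cancel(2) by metis
  have e4': "h X = h (X \<oplus>\<^sub>s {e}) \<oplus>\<^sub>s {w}" using e4 sd_cancel(1)[of X "{e}"]
    by (metis sd_cancel(2))
  have n1: "h X \<noteq> h (X \<oplus>\<^sub>s {d} \<oplus>\<^sub>s {e})"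
  proof
    assume "h X = h (X \<oplus>\<^sub>s {d} \<oplus>\<^sub>s {e})"
    hence "X = X \<oplus>\<^sub>s {d} \<oplus>\<^sub>s {e}" using hinj X X3 by blast
    thus False using de by (auto simp: set_eq_iff sd_mem)
  qed
  have n2: "h (X \<oplus>\<^sub>s {d}) \<noteq> h (X \<oplus>\<^sub>s {e})"
  proof
    assume "h (X \<oplus>\<^sub>s {d}) = h (X \<oplus>\<^sub>s {e})"
    hence "X \<oplus>\<^sub>s {d} = X \<oplus>\<^sub>s {e}" using hinj X1 X2 by blast
    thus False using de by (auto simp: set_eq_iff sd_mem)
  qed
  have "h X \<oplus>\<^sub>s h (X \<oplus>\<^sub>s {d}) = h (X \<oplus>\<^sub>s {e}) \<oplus>\<^sub>s h (X \<oplus>\<^sub>s {d} \<oplus>\<^sub>s {e})"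
    by (rule square_lemma[OF e1 e2 e3' e4' n1 n2])
  thus ?thesis unfolding delta_def using eq by simp
qed

lemma delta_const:
  assumes X: "X \<subseteq> {1..m}" and d: "d \<in> {1..m}"
  shows "delta X d = delta {} d"
proof -
  have fin: "finite X" using X finite_subset by blast
  have "X \<subseteq> {1..m} \<longrightarrow> delta X d = delta {} d"
    using fin
  proof (induction X rule: finite_induct)
    case empty then show ?case by simp
  next
    case (insert e F)
    show ?case
    proof
      assume s: "insert e F \<subseteq> {1..m}"
      hence F: "F \<subseteq> {1..m}" and e: "e \<in> {1..m}" by auto
      have ins: "insert e F = F \<oplus>\<^sub>s {e}" using insert(2) by (auto simp: set_eq_iff sd_mem)
      show "delta (insert e F) d = delta {} d"
      proof (cases "e = d")
        case True
        have "delta (F \<oplus>\<^sub>s {d}) d = delta F d"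
          unfolding delta_def sd_cancel(2) by (auto simp: set_eq_iff sd_mem)
        then show ?thesis using True ins insert(3) F by simp
      next
        case False
        then show ?thesis using delta_shift[OF F d e] ins insert(3) F by simp
      qed
    qed
  qed
  thus ?thesis using X by blast
qed

definition sig where "sig d = the_elem (delta {} d)"

lemma delta_sig: assumes d: "d \<in> {1..m}" shows "delta {} d = {sig d}"
proof -
  obtain c where "h ({} \<oplus>\<^sub>s {d}) = h {} \<oplus>\<^sub>s {c}" using adj d by blast
  hence "delta {} d = {c}" unfolding delta_def using sd_cancel(1) by metis
  thus ?thesis unfolding sig_def by simp
qed

lemma h_step:
  assumes X: "X \<subseteq> {1..m}" and d: "d \<in> {1..m}"
  shows "h (X \<oplus>\<^sub>s {d}) = h X \<oplus>\<^sub>s {sig d}"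
proof -
  have "delta X d = {sig d}" using delta_const[OF X d] delta_sig[OF d] by simp
  thus ?thesis unfolding delta_def using sd_cancel(1) by metis
qed

lemma sig_in: assumes d: "d \<in> {1..m}" shows "sig d \<in> {1..m}"
proof -
  have "{sig d} = h {} \<oplus>\<^sub>s h ({} \<oplus>\<^sub>s {d})" using delta_sig[OF d] unfolding delta_def by simp
  moreover have "h {} \<subseteq> {1..m}" "h ({} \<oplus>\<^sub>s {d}) \<subseteq> {1..m}" using hin sub_sd d by auto
  ultimately have "sig d \<in> h {} \<or> sig d \<in> h ({} \<oplus>\<^sub>s {d})" by (metis singletonI sd_mem)
  thus ?thesis using \<open>h {} \<subseteq> {1..m}\<close> \<open>h ({} \<oplus>\<^sub>s {d}) \<subseteq> {1..m}\<close> by blast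
qed

lemma sig_inj: assumes d: "d \<in> {1..m}" and e: "e \<in> {1..m}" and eq: "sig d = sig e" shows "d = e"
proof -
  have "h ({} \<oplus>\<^sub>s {d}) = h ({} \<oplus>\<^sub>s {e})"
    using h_step[of "{}" d] h_step[of "{}" e] d e eq by simp
  moreover have "{} \<oplus>\<^sub>s {d} \<subseteq> {1..m}" "{} \<oplus>\<^sub>s {e} \<subseteq> {1..m}" using sub_sd d e by auto
  ultimately have "{} \<oplus>\<^sub>s {d} = {} \<oplus>\<^sub>s {e}" using hinj by blast
  thus ?thesis by (auto simp: set_eq_iff sd_mem)
qed

lemma sig_mem:
  assumes U: "U \<subseteq> {1..m}" and i: "i \<in> {1..m}"
  shows "sig i \<in> h U \<longleftrightarrow> (sig i \<in> h {}) \<noteq> (i \<in> U)"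
proof -
  have fin: "finite U" using U finite_subset by blast
  have "U \<subseteq> {1..m} \<longrightarrow> (sig i \<in> h U \<longleftrightarrow> (sig i \<in> h {}) \<noteq> (i \<in> U))"
    using fin
  proof (induction U rule: finite_induct)
    case empty then show ?case by simp
  next
    case (insert e F)
    show ?case
    proof
      assume s: "insert e F \<subseteq> {1..m}"
      hence F: "F \<subseteq> {1..m}" and e: "e \<in> {1..m}" by auto
      have ins: "insert e F = F \<oplus>\<^sub>s {e}" using insert(2) by (auto simp: set_eq_iff sd_mem)
      have "h (insert e F) = h F \<oplus>\<^sub>s {sig e}" using h_step[OF F e] ins by simp
      moreover have "sig i = sig e \<longleftrightarrow> i = e" using sig_inj i e by blast
      ultimately show "sig i \<in> h (insert e F) \<longleftrightarrow> (sig i \<in> h {}) \<noteq> (i \<in> insert e F)"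
        using insert(3) F insert(2) by (auto simp: sd_mem)
    qed
  qed
  thus ?thesis using U by blast
qed

lemma psi_rel:
  assumes X: "X \<subseteq> {1..m}" and j: "j \<in> {1..m}"
  shows "sig j \<in> psi' (h X) \<longleftrightarrow> j \<in> psi X"
proof -
  have Y: "X \<oplus>\<^sub>s {j} \<subseteq> {1..m}" using sub_sd X j .
  have hs: "h (X \<oplus>\<^sub>s {j}) = h X \<oplus>\<^sub>s {sig j}" using h_step X j .
  have uniq: "\<And>A a b. A \<oplus>\<^sub>s {a} = A \<oplus>\<^sub>s {b} \<Longrightarrow> a = b"
    by (auto simp: set_eq_iff sd_mem)
  have "j \<in> psi X \<longleftrightarrow> cube_edge psi X (X \<oplus>\<^sub>s {j})"
    unfolding cube_edge_def using uniq by blast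
  also have "\<dots> \<longleftrightarrow> cube_edge psi' (h X) (h (X \<oplus>\<^sub>s {j}))" using edge X Y by blast
  also have "\<dots> \<longleftrightarrow> sig j \<in> psi' (h X)"
    unfolding cube_edge_def hs using uniq by blast
  finally show ?thesis by simp
qed

end

lemma trancl_map:
  assumes "(x, y) \<in> r\<^sup>+" and "\<And>a b. (a, b) \<in> r \<Longrightarrow> (f a, f b) \<in> s"
  shows "(f x, f y) \<in> s\<^sup>+"
  using assms(1)
proof (induction rule: trancl_induct)
  case (base y) then show ?case using assms(2) by blast
next
  case (step y z) then show ?case using assms(2) by (meson trancl.trancl_into_trancl)
qed

theorem theorem6p6:
  fixes n :: nat and phi psi :: "nat set \<Rightarrow> nat set"
  assumes "is_USO n phi"
    and "\<not> property_L n phi"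
    and "kaleidoscope n phi psi"
  shows "\<forall>psi'. is_USO (2*n) psi' \<and> USO_isomorphic (2*n) psi psi' \<longrightarrow> \<not> property_L (2*n) psi'"
proof (intro allI impI)
  fix psi' assume A: "is_USO (2*n) psi' \<and> USO_isomorphic (2*n) psi psi'"
  obtain h where hb: "bij_betw h (Pow {1..2*n}) (Pow {1..2*n})"
    and he: "\<forall>V\<in>Pow {1..2*n}. \<forall>V'\<in>Pow {1..2*n}. cube_edge psi V V' \<longleftrightarrow> cube_edge psi' (h V) (h V')"
    using A unfolding USO_isomorphic_def by blast
  have kal: "is_USO (2*n) psi"
    and kal2: "\<And>V. V \<subseteq> {1..2*n} \<Longrightarrow> low_part n (psi V) = phi (low_part n V \<oplus>\<^sub>s high_part n V)"
    using assms(3) unfolding kaleidoscope_def by auto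
  have ori: "cube_orientation (2*n) psi" using kal unfolding is_USO_def by blast
  interpret I: iso_setup "2*n" psi psi' h using ori hb he by unfold_locales
  obtain V0 where V0: "V0 \<subseteq> {1..n}" and cyc: "\<not> acyclic (L_graph n phi V0)"
    using assms(2) unfolding property_L_def by blast
  obtain x where x: "(x, x) \<in> (L_graph n phi V0)\<^sup>+" using cyc unfolding acyclic_def by blast
  define UL where "UL = {i \<in> {1..n}. I.sig i \<in> h {}}"
  define UH where "UH = (\<lambda>i. i + n) ` (V0 \<oplus>\<^sub>s UL)"
  define U where "U = UL \<union> UH"
  have ULs: "UL \<subseteq> {1..n}" unfolding UL_def by auto
  have sdsub: "V0 \<oplus>\<^sub>s UL \<subseteq> V0 \<union> UL" by (auto simp: sd_mem)
  hence sdsub: "V0 \<oplus>\<^sub>s UL \<subseteq> {1..n}" using V0 ULs by blast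
  have UHs: "UH \<subseteq> {n+1..2*n}" unfolding UH_def using sdsub by auto
  have Us: "U \<subseteq> {1..2*n}" unfolding U_def using ULs UHs by auto
  have lowU: "low_part n U = UL" unfolding low_part_def U_def using ULs UHs by auto
  have hp: "\<And>W. W \<inter> {n+1..2*n} = UH \<Longrightarrow> high_part n W = V0 \<oplus>\<^sub>s UL"
  proof -
    fix W assume "W \<inter> {n+1..2*n} = UH"
    hence "high_part n W = (\<lambda>i. i - n) ` UH" unfolding high_part_def by simp
    also have "\<dots> = (\<lambda>i. i - n) ` (\<lambda>i. i + n) ` (V0 \<oplus>\<^sub>s UL)" unfolding UH_def ..
    also have "\<dots> = V0 \<oplus>\<^sub>s UL" by (simp add: image_image)
    finally show "high_part n W = V0 \<oplus>\<^sub>s UL" .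
  qed
  have highU: "high_part n U = V0 \<oplus>\<^sub>s UL"
    by (rule hp) (use ULs UHs in \<open>auto simp: U_def\<close>)
  have W0: "low_part n U \<oplus>\<^sub>s high_part n U = V0" using lowU highU
    by (auto simp: set_eq_iff sd_mem)
  have W1: "low_part n (U \<oplus>\<^sub>s {a}) \<oplus>\<^sub>s high_part n (U \<oplus>\<^sub>s {a}) = V0 \<union> {a}"
    if a: "a \<in> {1..n}" "a \<notin> V0" for a
  proof -
    have l: "low_part n (U \<oplus>\<^sub>s {a}) = UL \<oplus>\<^sub>s {a}" using lowU a unfolding low_part_def
      by (auto simp: set_eq_iff sd_mem)
    have "high_part n (U \<oplus>\<^sub>s {a}) = V0 \<oplus>\<^sub>s UL"
      by (rule hp) (use ULs UHs a in \<open>auto simp: U_def sd_mem\<close>)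
    thus ?thesis using l a by (auto simp: set_eq_iff sd_mem)
  qed
  have notin: "I.sig a \<notin> h U" if a: "a \<in> {1..n}" for a
  proof -
    have a2: "a \<in> {1..2*n}" using a by auto
    have "a \<in> U \<longleftrightarrow> I.sig a \<in> h {}" unfolding U_def UL_def using a UHs by auto
    thus ?thesis using I.sig_mem[OF Us a2] by blast
  qed
  have arc: "(I.sig a, I.sig b) \<in> L_graph (2*n) psi' (h U)" if ab: "(a, b) \<in> L_graph n phi V0" for a b
  proof -
    have a: "a \<in> {1..n}" "a \<notin> V0" and b: "b \<in> {1..n}" "b \<notin> V0" and ne: "a \<noteq> b"
      and arcb: "b \<in> phi V0 \<oplus>\<^sub>s phi (V0 \<union> {a})"
      using ab unfolding L_graph_def by auto
    have a2: "a \<in> {1..2*n}" and b2: "b \<in> {1..2*n}" using a b by auto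
    have sa: "I.sig a \<in> {1..2*n}" "I.sig b \<in> {1..2*n}" using I.sig_in a2 b2 by auto
    have sne: "I.sig a \<noteq> I.sig b" using I.sig_inj a2 b2 ne by blast
    have Ua: "U \<oplus>\<^sub>s {a} \<subseteq> {1..2*n}" using I.sub_sd Us a2 .
    have un: "h U \<union> {I.sig a} = h (U \<oplus>\<^sub>s {a})"
      using I.h_step[OF Us a2] notin[OF a(1)] by (auto simp: set_eq_iff sd_mem)
    have "b \<in> low_part n (psi U) \<oplus>\<^sub>s low_part n (psi (U \<oplus>\<^sub>s {a}))"
      using arcb kal2[OF Us] kal2[OF Ua] W0 W1[OF a] by simp
    hence "b \<in> psi U \<oplus>\<^sub>s psi (U \<oplus>\<^sub>s {a})" using b unfolding low_part_def by (auto simp: sd_mem)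
    hence "I.sig b \<in> psi' (h U) \<oplus>\<^sub>s psi' (h U \<union> {I.sig a})"
      unfolding un using I.psi_rel[OF Us b2] I.psi_rel[OF Ua b2] by (simp add: sd_mem)
    thus ?thesis unfolding L_graph_def using sa sne notin a b by auto
  qed
  have "(I.sig x, I.sig x) \<in> (L_graph (2*n) psi' (h U))\<^sup>+"
    by (rule trancl_map[OF x arc])
  hence "\<not> acyclic (L_graph (2*n) psi' (h U))" unfolding acyclic_def by blast
  moreover have "h U \<subseteq> {1..2*n}" using I.hin Us by blast
  ultimately show "\<not> property_L (2*n) psi'" unfolding property_L_def by blast
qed

end
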